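(* Let $m$, $c$, $d$ be positive integers with $m-2c-1>0$. Let $\mathbf{w}_{c+1},\dots,\mathbf{w}_m\in\mathbb{R}^d$ (the benign local models), let $\mathbf{w}_{Re}\in\mathbb{R}^d$, and let $\mathbf{s}\in\{-1,1\}^d$. Consider the optimization problem over $\lambda>0$: $$\max_{\lambda}\ \lambda \quad\text{subject to}\quad \mathbf{w}_1'=\mathrm{Krum}(\mathbf{w}_1',\dots,\mathbf{w}_c',\mathbf{w}_{c+1},\dots,\mathbf{w}_m),\quad \mathbf{w}_1'=\mathbf{w}_{Re}-\lambda\mathbf{s},\quad \mathbf{w}_i'=\mathbf{w}_1' \text{ for } i=2,\dots,c,$$ where the first constraint means that Krum, applied to these $m$ vectors with parameter $c$, selects $\mathbf{w}_1'$. Suppose $\lambda$ is a solution to this optimization problem. Then $$\lambda\le\sqrt{\frac{1}{(m-2c-1)d}\cdot\min_{c+1\le i\le m}\sum_{l\in\tilde{\Gamma}_{\mathbf{w}_i}^{m-c-2}}D^2(\mathbf{w}_l,\mathbf{w}_i)}\;+\;\frac{1}{\sqrt{d}}\cdot\max_{c+1\le i\le m}D(\mathbf{w}_i,\mathbf{w}_{Re}),$$ where $D(\cdot,\cdot)$ is Euclidean distance and $\tilde{\Gamma}_{\mathbf{w}_i}^{m-c-2}$ is the set of (indices of) the $m-c-2$ benign local models among $\mathbf{w}_{c+1},\dots,\mathbf{w}_m$, other than $\mathbf{w}_i$ itself, that have the smallest Euclidean distance to $\mathbf{w}_i$.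
   Context: Krum aggregation rule with parameter $c$ (an assumed upper bound on the number of compromised devices): given $m$ local models $\mathbf{v}_1,\dots,\mathbf{v}_m\in\mathbb{R}^d$, for each $\mathbf{v}_i$ compute the $m-c-2$ local models among the others that are closest to $\mathbf{v}_i$ in Euclidean distance, and let the score of $\mathbf{v}_i$ be the sum of the squared Euclidean distances from $\mathbf{v}_i$ to these $m-c-2$ models. Krum outputs (selects) a local model with the smallest score. In the setting, $\mathbf{w}_1',\dots,\mathbf{w}_c'$ are the crafted local models of the $c$ compromised devices and $d$ is the number of model parameters. *)

theory Defs
  imports "HOL-Analysis.Analysis"
begin

definition nearest_sqdist_sum :: "nat \<Rightarrow> (nat \<Rightarrow> 'a::metric_space) \<Rightarrow> nat set \<Rightarrow> nat \<Rightarrow> real" where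
  "nearest_sqdist_sum k v I i =
     sum_list (take k (sort (map (\<lambda>j. (dist (v i) (v j))^2) (sorted_list_of_set (I - {i})))))"

definition krum_score :: "nat \<Rightarrow> nat \<Rightarrow> (nat \<Rightarrow> 'a::metric_space) \<Rightarrow> nat \<Rightarrow> real" where
  "krum_score m c v i = nearest_sqdist_sum (m - c - 2) v {1..m} i"

definition krum_outputs :: "nat \<Rightarrow> nat \<Rightarrow> (nat \<Rightarrow> 'a::metric_space) \<Rightarrow> 'a \<Rightarrow> bool" where
  "krum_outputs m c v x \<longleftrightarrow>
     (\<exists>i\<in>{1..m}. v i = x \<and> (\<forall>j\<in>{1..m}. krum_score m c v i \<le> krum_score m c v j))"

definition attacked_models ::
  "nat \<Rightarrow> (nat \<Rightarrow> real^'d) \<Rightarrow> real^'d \<Rightarrow> real^'d \<Rightarrow> real \<Rightarrow> nat \<Rightarrow> real^'d" where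
  "attacked_models c w wRe s lam j = (if 1 \<le> j \<and> j \<le> c then wRe - lam *\<^sub>R s else w j)"

definition krum_attack_feasible ::
  "nat \<Rightarrow> nat \<Rightarrow> (nat \<Rightarrow> real^'d) \<Rightarrow> real^'d \<Rightarrow> real^'d \<Rightarrow> real \<Rightarrow> bool" where
  "krum_attack_feasible m c w wRe s lam \<longleftrightarrow>
     lam > 0 \<and> krum_outputs m c (attacked_models c w wRe s lam) (wRe - lam *\<^sub>R s)"

end

theory Submission
  imports Defs
begin

lemma sorted_prefix_min:
  fixes zs ys :: "real list"
  shows "sorted zs \<Longrightarrow> mset ys \<subseteq># mset zs \<Longrightarrow> sum_list (take (length ys) zs) \<le> sum_list ys"
proof (induction zs arbitrary: ys)
  case Nil
  then show ?case by simp
next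
  case (Cons a t)
  have st: "sorted t" and ge: "\<forall>x\<in>set t. a \<le> x" using Cons.prems(1) by auto
  show ?case
  proof (cases ys)
    case Nil then show ?thesis by simp
  next
    case (Cons b ys2)
    show ?thesis
    proof (cases "a \<in> set ys")
      case True
      define ys' where "ys' = remove1 a ys"
      have m: "mset ys = add_mset a (mset ys')" using True ys'_def by simp
      have sub: "mset ys' \<subseteq># mset t" using Cons.prems(2) m by simp
      have len: "length ys = Suc (length ys')" using m by (metis size_add_mset size_mset)
      have "sum_list (take (length ys') t) \<le> sum_list ys'" using Cons.IH[OF st sub] .
      moreover have "sum_list ys = a + sum_list ys'" using m by (metis sum_mset_sum_list sum_mset.add_mset)
      ultimately show ?thesis using len by simp
    next
      case False
      have "mset ys \<subseteq># mset t" using Cons.prems(2) False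
        by (metis Diff_eq_empty_iff_mset in_multiset_in_set minus_add_mset_if_not_in_lhs mset.simps(2))
      then have sub: "mset ys2 \<subseteq># mset t" and "b \<in> set t" using Cons
        by (metis mset.simps(2) mset_subset_eq_insertD set_mset_mset subset_mset.strict_iff_order)+
      then have "a \<le> b" using ge by auto
      moreover have "sum_list (take (length ys2) t) \<le> sum_list ys2" using Cons.IH[OF st sub] .
      ultimately show ?thesis using Cons by simp
    qed
  qed
qed

lemma mset_sls: "mset (sorted_list_of_set A) = mset_set A"
  by (metis sorted_list_of_mset_set mset_sorted_list_of_multiset)

lemma mset_take_sub: "mset (take k l) \<subseteq># mset l"
  by (metis append_take_drop_id mset_append mset_subset_eq_add_left)

lemma size_ge_sum_mset:
  fixes N :: "real multiset"
  shows "\<forall>x\<in>#N. mu \<le> x \<Longrightarrow> real (size N) * mu \<le> sum_mset N"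
  by (induction N) (auto simp: algebra_simps)

lemma lower_prefix:
  fixes ys xs :: "real list"
  assumes sub: "mset ys \<subseteq># mset xs" and nn: "\<forall>x\<in>set xs. 0 \<le> x" and mu: "0 \<le> mu"
  shows "real (length ys - size (filter_mset (\<lambda>y. y < mu) (mset xs))) * mu \<le> sum_list ys"
proof -
  define M where "M = mset ys"
  have A: "size (filter_mset (\<lambda>y. y < mu) M) \<le> size (filter_mset (\<lambda>y. y < mu) (mset xs))"
    unfolding M_def by (intro size_mset_mono multiset_filter_mono sub)
  have B: "size M = size (filter_mset (\<lambda>y. y < mu) M) + size (filter_mset (\<lambda>y. \<not> y < mu) M)"
    by (metis multiset_partition size_union)
  have S: "sum_mset M = sum_mset (filter_mset (\<lambda>y. y < mu) M) + sum_mset (filter_mset (\<lambda>y. \<not> y < mu) M)"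
    by (metis multiset_partition sum_mset.union)
  have C: "real (size (filter_mset (\<lambda>y. \<not> y < mu) M)) * mu \<le> sum_mset (filter_mset (\<lambda>y. \<not> y < mu) M)"
    by (intro size_ge_sum_mset) auto
  have "\<forall>x\<in>#M. 0 \<le> x" using sub nn unfolding M_def by (metis mset_subset_eqD set_mset_mset)
  then have D: "0 \<le> sum_mset (filter_mset (\<lambda>y. y < mu) M)"
    using size_ge_sum_mset[of "filter_mset (\<lambda>y. y < mu) M" 0] by auto
  have len: "length ys = size M" unfolding M_def by simp
  have "length ys - size (filter_mset (\<lambda>y. y < mu) (mset xs)) \<le> size (filter_mset (\<lambda>y. \<not> y < mu) M)"
    using A B len by linarith
  then have "real (length ys - size (filter_mset (\<lambda>y. y < mu) (mset xs))) * mu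
      \<le> real (size (filter_mset (\<lambda>y. \<not> y < mu) M)) * mu"
    using mu by (intro mult_right_mono) auto
  also have "\<dots> \<le> sum_mset M" using C D S by linarith
  also have "\<dots> = sum_list ys" unfolding M_def by (simp add: sum_mset_sum_list)
  finally show ?thesis .
qed

theorem theorem1:
  fixes m c :: nat
    and w :: "nat \<Rightarrow> real^'d"
    and wRe s :: "real^'d"
    and lam :: real
  assumes "c > 0"
    and "m > 2 * c + 1"
    and "\<forall>k. s $ k = 1 \<or> s $ k = -1"
    and "krum_attack_feasible m c w wRe s lam"
    and "\<forall>\<mu>. krum_attack_feasible m c w wRe s \<mu> \<longrightarrow> \<mu> \<le> lam"
  shows "lam \<le> sqrt (1 / (real (m - 2 * c - 1) * real CARD('d)) *
              Min ((\<lambda>i. nearest_sqdist_sum (m - c - 2) w {c+1..m} i) ` {c+1..m}))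
            + 1 / sqrt (real CARD('d)) * Max ((\<lambda>i. dist (w i) wRe) ` {c+1..m})"
proof -
  define v where "v = attacked_models c w wRe s lam"
  define x where "x = wRe - lam *\<^sub>R s"
  define k where "k = m - c - 2"
  define B where "B = {c+1..m}"
  have vB: "\<And>j. j \<in> B \<Longrightarrow> v j = w j" unfolding v_def B_def attacked_models_def by auto
  have fB: "finite B" and neB: "B \<noteq> {}" unfolding B_def using assms(2) by auto
  have lam0: "lam > 0" and ko: "krum_outputs m c v x"
    using assms(4) unfolding krum_attack_feasible_def v_def x_def by auto
  then obtain i0 where i0: "i0 \<in> {1..m}" "v i0 = x"
    and i0min: "\<And>j. j \<in> {1..m} \<Longrightarrow> krum_score m c v i0 \<le> krum_score m c v j"
    unfolding krum_outputs_def by blast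
  define mu where "mu = Min ((\<lambda>j. (dist x (w j))^2) ` B)"
  obtain j0 where j0: "j0 \<in> B" "mu = (dist x (w j0))^2"
  proof -
    have "mu \<in> (\<lambda>j. (dist x (w j))^2) ` B" unfolding mu_def using fB neB by (intro Min_in) auto
    then show ?thesis using that by auto
  qed
  have mule: "\<And>j. j \<in> B \<Longrightarrow> mu \<le> (dist x (w j))^2" unfolding mu_def using fB by auto
  have mu0: "0 \<le> mu" using j0 by simp
  define Mn where "Mn = Min ((\<lambda>i. nearest_sqdist_sum (m - c - 2) w {c+1..m} i) ` {c+1..m})"
  define Mx where "Mx = Max ((\<lambda>i. dist (w i) wRe) ` {c+1..m})"
  define f0 where "f0 = (\<lambda>j. (dist (v i0) (v j))^2)"
  define xs0 where "xs0 = map f0 (sorted_list_of_set ({1..m} - {i0}))"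
  have sc0: "krum_score m c v i0 = sum_list (take k (sort xs0))"
    unfolding krum_score_def nearest_sqdist_sum_def xs0_def f0_def k_def by simp
  have lenxs0: "length xs0 = m - 1" unfolding xs0_def using i0 by auto
  have msxs0: "mset xs0 = image_mset f0 (mset_set ({1..m} - {i0}))"
    unfolding xs0_def by (simp add: mset_sls)
  have cnt_sub: "{j \<in> {1..m} - {i0}. f0 j < mu} \<subseteq> {1..c} - {i0}"
  proof
    fix j assume j: "j \<in> {j \<in> {1..m} - {i0}. f0 j < mu}"
    show "j \<in> {1..c} - {i0}"
    proof (rule ccontr)
      assume "j \<notin> {1..c} - {i0}"
      then have "j \<in> B" using j unfolding B_def by auto
      then have "mu \<le> f0 j" using mule[of j] vB[of j] i0 unfolding f0_def by simp
      then show False using j by simp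
    qed
  qed
  have cnt: "card {j \<in> {1..m} - {i0}. f0 j < mu} \<le> c - 1"
  proof (cases "i0 \<le> c")
    case True
    have "card {j \<in> {1..m} - {i0}. f0 j < mu} \<le> card ({1..c} - {i0})"
      by (intro card_mono cnt_sub) auto
    also have "\<dots> = c - 1" using True i0 by simp
    finally show ?thesis .
  next
    case False
    then have "i0 \<in> B" using i0 unfolding B_def by auto
    then have "mu \<le> 0" using mule[of i0] vB[of i0] i0 by simp
    then have "{j \<in> {1..m} - {i0}. f0 j < mu} = {}" unfolding f0_def
      by (auto simp: not_less intro: order_trans[OF _ zero_le_power2])
    then show ?thesis by (simp only: card.empty)
  qed
  have "size (filter_mset (\<lambda>y. y < mu) (mset xs0)) = card {j \<in> {1..m} - {i0}. f0 j < mu}"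
    unfolding msxs0 by (simp add: filter_mset_image_mset filter_mset_mset_set)
  with cnt have cnt2: "size (filter_mset (\<lambda>y. y < mu) (mset xs0)) \<le> c - 1" by simp
  have "real (length (take k (sort xs0)) - size (filter_mset (\<lambda>y. y < mu) (mset xs0))) * mu
      \<le> sum_list (take k (sort xs0))"
    by (rule lower_prefix) (use mu0 mset_take_sub[of k "sort xs0"] in \<open>auto simp: xs0_def f0_def\<close>)
  moreover have "length (take k (sort xs0)) = k" using lenxs0 assms(2) unfolding k_def by simp
  moreover have "k - size (filter_mset (\<lambda>y. y < mu) (mset xs0)) \<ge> m - 2 * c - 1"
    using cnt2 assms(1,2) unfolding k_def by linarith
  ultimately have low0: "real (m - 2 * c - 1) * mu \<le> real (k - size (filter_mset (\<lambda>y. y < mu) (mset xs0))) * mu"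
    and low1: "real (k - size (filter_mset (\<lambda>y. y < mu) (mset xs0))) * mu \<le> krum_score m c v i0"
    using mu0 unfolding sc0 by (auto intro!: mult_right_mono)
  have low: "real (m - 2 * c - 1) * mu \<le> krum_score m c v i0" using low0 low1 by linarith
  have up: "krum_score m c v i \<le> nearest_sqdist_sum (m - c - 2) w {c+1..m} i" if iB: "i \<in> B" for i
  proof -
    define fi where "fi = (\<lambda>j. (dist (v i) (v j))^2)"
    define xsi where "xsi = map fi (sorted_list_of_set ({1..m} - {i}))"
    define ysi where "ysi = map (\<lambda>j. (dist (w i) (w j))^2) (sorted_list_of_set (B - {i}))"
    have sci: "krum_score m c v i = sum_list (take k (sort xsi))"
      unfolding krum_score_def nearest_sqdist_sum_def xsi_def fi_def k_def by simp
    have nei: "nearest_sqdist_sum (m - c - 2) w {c+1..m} i = sum_list (take k (sort ysi))"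
      unfolding nearest_sqdist_sum_def ysi_def k_def B_def by simp
    have lenys: "length ysi = m - c - 1" unfolding ysi_def using iB fB unfolding B_def by auto
    have "mset ysi = image_mset fi (mset_set (B - {i}))"
      unfolding ysi_def fi_def mset_map mset_sls using vB iB fB by (auto intro!: image_mset_cong)
    also have "\<dots> \<subseteq># image_mset fi (mset_set ({1..m} - {i}))"
      by (intro image_mset_subseteq_mono subset_imp_msubset_mset_set) (auto simp: B_def)
    also have "\<dots> = mset (sort xsi)" unfolding xsi_def by (simp add: mset_sls)
    finally have "mset (take k (sort ysi)) \<subseteq># mset (sort xsi)"
      using mset_take_sub[of k "sort ysi"] by (metis mset_sort subset_mset.order_trans)
    then have "sum_list (take (length (take k (sort ysi))) (sort xsi)) \<le> sum_list (take k (sort ysi))"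
      by (intro sorted_prefix_min) auto
    moreover have "length (take k (sort ysi)) = k" using lenys unfolding k_def by simp
    ultimately show ?thesis using sci nei by simp
  qed
  have "real (m - 2 * c - 1) * mu \<le> Mn"
    unfolding Mn_def
  proof (rule Min.boundedI)
    show "finite ((\<lambda>i. nearest_sqdist_sum (m - c - 2) w {c + 1..m} i) ` {c + 1..m})" by simp
    show "(\<lambda>i. nearest_sqdist_sum (m - c - 2) w {c + 1..m} i) ` {c + 1..m} \<noteq> {}" using neB B_def by simp
    fix a assume "a \<in> (\<lambda>i. nearest_sqdist_sum (m - c - 2) w {c + 1..m} i) ` {c + 1..m}"
    then obtain i where i: "i \<in> B" "a = nearest_sqdist_sum (m - c - 2) w {c + 1..m} i"
      unfolding B_def by auto
    have "i \<in> {1..m}" using i unfolding B_def by auto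
    then show "real (m - 2 * c - 1) * mu \<le> a"
      using low i0min[of i] up[OF i(1)] i(2) by linarith
  qed
  define q where "q = real (m - 2 * c - 1)"
  have q0: "q > 0" unfolding q_def using assms(2) by simp
  have "(dist x (w j0))^2 \<le> Mn / q" using j0 \<open>real (m - 2 * c - 1) * mu \<le> Mn\<close> q0
    unfolding q_def by (subst pos_le_divide_eq[OF q0[unfolded q_def]]) (simp add: mult.commute)
  then have d1: "dist x (w j0) \<le> sqrt (Mn / q)" by (simp add: real_le_rsqrt)
  have d2: "dist (w j0) wRe \<le> Mx" unfolding Mx_def using j0 unfolding B_def by (intro Max_ge) auto
  define D where "D = real CARD('d)"
  have D0: "D > 0" unfolding D_def by simp
  have "s \<bullet> s = (\<Sum>i\<in>UNIV. s $ i * s $ i)" by (simp add: inner_vec_def)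
  also have "\<dots> = (\<Sum>i\<in>(UNIV::'d set). 1)"
  proof (rule sum.cong[OF refl])
    fix i have "s $ i = 1 \<or> s $ i = -1" using assms(3) by blast
    then show "s $ i * s $ i = 1" by auto
  qed
  finally have "s \<bullet> s = D" unfolding D_def by simp
  then have ns: "norm s = sqrt D" by (simp add: norm_eq_sqrt_inner)
  have e1: "dist x wRe = lam * sqrt D" unfolding x_def dist_norm using lam0 ns by simp
  have e2: "dist x wRe \<le> dist x (w j0) + dist (w j0) wRe" by (rule dist_triangle)
  from e1 e2 have "lam * sqrt D \<le> sqrt (Mn / q) + Mx" using d1 d2 by linarith
  then have "lam \<le> (sqrt (Mn / q) + Mx) / sqrt D" using D0 by (simp add: pos_le_divide_eq)
  also have "\<dots> = sqrt (Mn / q) / sqrt D + 1 / sqrt D * Mx"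
    by (simp add: add_divide_distrib)
  also have "sqrt (Mn / q) / sqrt D = sqrt (1 / (q * D) * Mn)"
  proof -
    have "1 / (q * D) * Mn = (Mn / q) / D" by simp
    then show ?thesis by (simp only: real_sqrt_divide)
  qed
  finally show ?thesis unfolding q_def D_def Mn_def Mx_def .
qed

end
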